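(* Let $G$ be a fixed bipartite graph with $|V(G)|=p\ge 3$ vertices and $|E(G)|=q$ edges. Then there exists a constant $C>0$ (depending on $G$) such that for all sufficiently large $n$, \[ \operatorname{br}(G,K_{n,n}) > C\left(\frac{n}{\log n}\right)^{(q-1)/(p-2)}. \]
   Context: For bipartite graphs $G_1,G_2$, the bipartite Ramsey number $\operatorname{br}(G_1,G_2)$ is the smallest integer $N$ such that every red/blue coloring of the edges of the complete bipartite graph $K_{N,N}$ contains a red copy of $G_1$ or a blue copy of $G_2$. $K_{n,n}$ denotes the complete bipartite graph with both parts of size $n$. Rounding (floors/ceilings) is ignored. *)

theory Defs
  imports Complex_Main
begin

definition simple_graph :: "'a set \<Rightarrow> 'a set set \<Rightarrow> bool" where
  "simple_graph V E \<longleftrightarrow> finite V \<and> (\<forall>e\<in>E. e \<subseteq> V \<and> card e = 2)"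

definition bipartite_graph :: "'a set \<Rightarrow> 'a set set \<Rightarrow> bool" where
  "bipartite_graph V E \<longleftrightarrow> simple_graph V E \<and> (\<exists>X\<subseteq>V. \<forall>e\<in>E. card (e \<inter> X) = 1)"

text \<open>Vertices of K_{N,N}: (side, index) with index < N. A red/blue colouring of K_{N,N} is
  c :: nat \<Rightarrow> nat \<Rightarrow> bool, where c i j is the colour of the edge between left vertex i
  and right vertex j (True = red, False = blue).\<close>
definition KNN_verts :: "nat \<Rightarrow> (bool \<times> nat) set" where
  "KNN_verts N = {x. snd x < N}"

definition edge_colour :: "(nat \<Rightarrow> nat \<Rightarrow> bool) \<Rightarrow> bool \<times> nat \<Rightarrow> bool \<times> nat \<Rightarrow> bool" where
  "edge_colour c x y = (if fst x then c (snd x) (snd y) else c (snd y) (snd x))"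

definition has_mono_copy ::
  "nat \<Rightarrow> (nat \<Rightarrow> nat \<Rightarrow> bool) \<Rightarrow> bool \<Rightarrow> 'a set \<Rightarrow> 'a set set \<Rightarrow> bool" where
  "has_mono_copy N c col V E \<longleftrightarrow>
     (\<exists>f. inj_on f V \<and> f ` V \<subseteq> KNN_verts N \<and>
          (\<forall>u v. {u, v} \<in> E \<longrightarrow> fst (f u) \<noteq> fst (f v) \<and> edge_colour c (f u) (f v) = col))"

definition bip_ramsey :: "'a set \<Rightarrow> 'a set set \<Rightarrow> 'b set \<Rightarrow> 'b set set \<Rightarrow> nat" where
  "bip_ramsey V1 E1 V2 E2 =
     (LEAST N. \<forall>c. has_mono_copy N c True V1 E1 \<or> has_mono_copy N c False V2 E2)"

definition Kbip_V :: "nat \<Rightarrow> (bool \<times> nat) set" where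
  "Kbip_V n = {x. snd x < n}"

definition Kbip_E :: "nat \<Rightarrow> (bool \<times> nat) set set" where
  "Kbip_E n = {{x, y} | x y. snd x < n \<and> snd y < n \<and> fst x \<noteq> fst y}"

end

theory Submission
  imports Defs "HOL-Library.FuncSet" "HOL-Library.Ramsey"
begin


lemma prod_if_zero:
  fixes r :: real
  assumes "finite R"
  shows "(\<Prod>x\<in>R. if x \<in> Y then 0 else r) = (if R \<inter> Y = {} then r ^ card R else 0)"
proof (cases "R \<inter> Y = {}")
  case True
  then have "(\<Prod>x\<in>R. if x \<in> Y then 0 else r) = (\<Prod>x\<in>R. r)"
    by (intro prod.cong) auto
  then show ?thesis using True by simp
next
  case False
  then obtain x where "x \<in> R" "x \<in> Y" by auto
  then show ?thesis using assms False by (auto intro!: prod_zero)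
qed

lemma weight_sum:
  fixes U X Y :: "'x set" and r :: real
  assumes U: "finite U" and XU: "X \<subseteq> U" and YU: "Y \<subseteq> U" and XY: "X \<inter> Y = {}"
  shows "(\<Sum>R\<in>Pow U. (if X \<subseteq> R \<and> R \<inter> Y = {} then r ^ card R * (1-r) ^ card (U-R) else 0))
          = r ^ card X * (1-r) ^ card Y"
proof -
  define f1 where "f1 = (\<lambda>x. if x \<in> Y then 0 else r)"
  define f2 where "f2 = (\<lambda>x. if x \<in> X then 0 else 1 - r)"
  have "(\<Prod>x\<in>U. f1 x + f2 x) = (\<Sum>R\<in>Pow U. (\<Prod>x\<in>R. f1 x) * (\<Prod>x\<in>U-R. f2 x))"
    by (rule prod_add[OF U])
  also have "\<dots> = (\<Sum>R\<in>Pow U. (if X \<subseteq> R \<and> R \<inter> Y = {} then r ^ card R * (1-r) ^ card (U-R) else 0))"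
  proof (intro sum.cong refl)
    fix R assume R: "R \<in> Pow U"
    have fR: "finite R" "finite (U - R)" using R U finite_subset by auto
    have "(\<Prod>x\<in>R. f1 x) = (if R \<inter> Y = {} then r ^ card R else 0)"
      unfolding f1_def using prod_if_zero[OF fR(1)] by simp
    moreover have "(\<Prod>x\<in>U-R. f2 x) = (if (U-R) \<inter> X = {} then (1-r) ^ card (U-R) else 0)"
      unfolding f2_def using prod_if_zero[OF fR(2)] by simp
    moreover have "((U-R) \<inter> X = {}) = (X \<subseteq> R)" using XU by auto
    ultimately show "(\<Prod>x\<in>R. f1 x) * (\<Prod>x\<in>U-R. f2 x) =
       (if X \<subseteq> R \<and> R \<inter> Y = {} then r ^ card R * (1-r) ^ card (U-R) else 0)" by auto
  qed
  finally have eq: "(\<Prod>x\<in>U. f1 x + f2 x) = (\<Sum>R\<in>Pow U. (if X \<subseteq> R \<and> R \<inter> Y = {} then r ^ card R * (1-r) ^ card (U-R) else 0))" .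
  have "(\<Prod>x\<in>U. f1 x + f2 x) = (\<Prod>x\<in>U. (if x \<in> X then r else 1) * (if x \<in> Y then 1 - r else 1))"
    by (intro prod.cong refl) (use XY in \<open>auto simp: f1_def f2_def\<close>)
  also have "\<dots> = (\<Prod>x\<in>U. (if x \<in> X then r else 1)) * (\<Prod>x\<in>U. (if x \<in> Y then 1 - r else 1))"
    by (rule prod.distrib)
  also have "\<dots> = r ^ card X * (1-r) ^ card Y"
    using XU YU U by (simp add: prod.If_cases Int_absorb1 Int_absorb2)
  finally show ?thesis using eq by simp
qed


lemma core:
  fixes U :: "'x set" and Ds Bs :: "'x set set" and r :: real and q :: nat
  assumes U: "finite U" and Ds: "Ds \<subseteq> Pow U" and Bs: "Bs \<subseteq> Pow U"
    and q1: "q \<ge> 1" and cardD: "\<forall>D\<in>Ds. card D \<ge> q"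
    and r0: "0 < r" and r1: "r \<le> 1/2"
    and sum_lt: "(\<Sum>B\<in>Bs. (1-r) ^ card B * (1 + (r/(1-r)) ^ q) ^ card {D\<in>Ds. D \<inter> B \<noteq> {}}) < 1"
  shows "\<exists>R'\<subseteq>U. (\<forall>D\<in>Ds. \<not> D \<subseteq> R') \<and> (\<forall>B\<in>Bs. B \<inter> R' \<noteq> {})"
proof (rule ccontr)
  assume H0: "\<not> ?thesis"
  have H: "\<And>R'. R' \<subseteq> U \<Longrightarrow> (\<exists>D\<in>Ds. D \<subseteq> R') \<or> (\<exists>B\<in>Bs. B \<inter> R' = {})"
    using H0 by auto
  define w where "w R = r ^ card R * (1-r) ^ card (U-R)" for R :: "'x set"
  define DB where "DB B = {D\<in>Ds. D \<inter> B \<noteq> {}}" for B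
  define ind where "ind R B A \<longleftrightarrow> pairwise disjnt A \<and> \<Union>A \<subseteq> R \<and> R \<inter> (B - \<Union>A) = {}" for R B :: "'x set" and A :: "'x set set"
  define t where "t = (r/(1-r)) ^ q"
  have finPU: "finite (Pow U)" using U by simp
  have finBs: "finite Bs" using Bs finPU finite_subset by blast
  have finDs: "finite Ds" using Ds finPU finite_subset by blast
  have finDB: "finite (DB B)" for B using finDs unfolding DB_def by simp
  have w0: "w R \<ge> 0" for R using r0 r1 unfolding w_def by simp
  have claim1: "\<exists>B\<in>Bs. \<exists>A\<in>Pow (DB B). ind R B A" if R: "R \<subseteq> U" for R
  proof -
    define Red where "Red = {D\<in>Ds. D \<subseteq> R}"
    define Fam where "Fam = {F. F \<subseteq> Red \<and> pairwise disjnt F}"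
    have "finite Fam" unfolding Fam_def Red_def using finDs by (simp add: finite_subset)
    moreover have "{} \<in> Fam" unfolding Fam_def by simp
    ultimately obtain F where F: "F \<in> Fam" and Fmax: "\<And>G. G \<in> Fam \<Longrightarrow> F \<subseteq> G \<Longrightarrow> F = G"
      using finite_has_maximal[of Fam] by blast
    have FRed: "F \<subseteq> Red" and Fpw: "pairwise disjnt F" using F unfolding Fam_def by auto
    have "R - \<Union>F \<subseteq> U" using R by auto
    from H[OF this] show ?thesis
    proof
      assume "\<exists>D\<in>Ds. D \<subseteq> R - \<Union>F"
      then obtain D where D: "D \<in> Ds" "D \<subseteq> R - \<Union>F" by blast
      have "card D \<ge> 1" using cardD D q1 by force
      then have Dne: "D \<noteq> {}" by auto
      have DnF: "D \<notin> F" using D Dne by auto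
      have "insert D F \<in> Fam"
        unfolding Fam_def using FRed Fpw D
        by (auto simp: Red_def pairwise_insert disjnt_def)
      from Fmax[OF this] DnF show ?thesis by auto
    next
      assume "\<exists>B\<in>Bs. B \<inter> (R - \<Union>F) = {}"
      then obtain B where B: "B \<in> Bs" "B \<inter> (R - \<Union>F) = {}" by blast
      define A where "A = {D\<in>F. D \<inter> B \<noteq> {}}"
      have "A \<in> Pow (DB B)" using FRed unfolding A_def DB_def Red_def by auto
      moreover have "ind R B A"
        unfolding ind_def
      proof (intro conjI)
        show "pairwise disjnt A" using Fpw unfolding A_def by (rule pairwise_subset) auto
        show "\<Union>A \<subseteq> R" using FRed unfolding A_def Red_def by auto
        show "R \<inter> (B - \<Union>A) = {}" using B unfolding A_def by blast
      qed
      ultimately show ?thesis using B by blast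
    qed
  qed
  have one: "(\<Sum>R\<in>Pow U. w R) = 1"
  proof -
    have "(\<Prod>x\<in>U. r + (1-r)) = (\<Sum>R\<in>Pow U. (\<Prod>x\<in>R. r) * (\<Prod>x\<in>U-R. 1-r))"
      by (rule prod_add[OF U])
    then show ?thesis unfolding w_def by simp
  qed
  have claim3: "w R \<le> (\<Sum>B\<in>Bs. \<Sum>A\<in>Pow (DB B). if ind R B A then w R else 0)" if R: "R \<in> Pow U" for R
  proof -
    obtain B A where B: "B \<in> Bs" and A: "A \<in> Pow (DB B)" and iA: "ind R B A"
      using claim1 R by blast
    have "w R \<le> (\<Sum>A\<in>Pow (DB B). if ind R B A then w R else 0)"
      using member_le_sum[of A "Pow (DB B)" "\<lambda>A. if ind R B A then w R else 0"] A iA w0 finDB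
      by auto
    also have "\<dots> \<le> (\<Sum>B\<in>Bs. \<Sum>A\<in>Pow (DB B). if ind R B A then w R else 0)"
    proof (rule member_le_sum[OF B _ finBs])
      show "\<And>x. x \<in> Bs - {B} \<Longrightarrow> 0 \<le> (\<Sum>A\<in>Pow (DB x). if ind R x A then w R else 0)"
        by (intro sum_nonneg) (simp add: w0)
    qed
    finally show ?thesis .
  qed
  have claim4: "(\<Sum>R\<in>Pow U. if ind R B A then w R else 0) \<le> (1-r) ^ card B * t ^ card A"
    if B: "B \<in> Bs" and A: "A \<in> Pow (DB B)" for A B
  proof (cases "pairwise disjnt A")
    case False
    then show ?thesis unfolding ind_def t_def using r0 r1 by simp
  next
    case True
    define X where "X = \<Union>A"
    define Y where "Y = B - X"
    have AU: "\<forall>D\<in>A. D \<subseteq> U" using A Ds unfolding DB_def by auto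
    have XU: "X \<subseteq> U" using AU unfolding X_def by auto
    have YU: "Y \<subseteq> U" using B Bs unfolding Y_def by auto
    have "(\<Sum>R\<in>Pow U. if ind R B A then w R else 0)
        = (\<Sum>R\<in>Pow U. (if X \<subseteq> R \<and> R \<inter> Y = {} then r ^ card R * (1-r) ^ card (U-R) else 0))"
      unfolding ind_def w_def X_def Y_def using True by simp
    also have "\<dots> = r ^ card X * (1-r) ^ card Y"
      by (rule weight_sum[OF U XU YU]) (auto simp: Y_def)
    also have "\<dots> \<le> (1-r) ^ card B * t ^ card A"
    proof -
      have finA: "finite A" using A finDB finite_subset by blast
      have finD: "\<forall>D\<in>A. finite D" using AU U finite_subset by blast
      have cX: "card X = (\<Sum>D\<in>A. card D)"
        unfolding X_def by (rule card_Union_disjoint[OF True]) (use finD in auto)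
      have "q * card A \<le> (\<Sum>D\<in>A. card D)"
        using sum_bounded_below[of A q card] A cardD unfolding DB_def by (auto simp: mult.commute)
      then have cXq: "q * card A \<le> card X" using cX by simp
      have finXY: "finite X" "finite Y" using XU YU U finite_subset by auto
      have "card B \<le> card (X \<union> Y)" using finXY by (intro card_mono) (auto simp: Y_def)
      also have "\<dots> \<le> card X + card Y" by (rule card_Un_le)
      finally have cB: "card B \<le> card X + card Y" .
      define s where "s = r / (1-r)"
      have s0: "0 \<le> s" and s1: "s \<le> 1" using r0 r1 unfolding s_def by (auto simp: field_simps)
      have r_eq: "r = s * (1-r)" using r1 unfolding s_def by (auto simp: field_simps)
      have "r ^ card X * (1-r) ^ card Y = s ^ card X * (1-r) ^ (card X + card Y)"
        by (subst r_eq) (simp add: power_mult_distrib power_add)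
      also have "\<dots> \<le> s ^ (q * card A) * (1-r) ^ card B"
        by (intro mult_mono power_decreasing cXq cB) (use s0 s1 r0 r1 in auto)
      also have "\<dots> = (1-r) ^ card B * t ^ card A"
        unfolding t_def s_def by (simp add: power_mult)
      finally show ?thesis .
    qed
    finally show ?thesis .
  qed
  have claim5: "(\<Sum>A\<in>Pow (DB B). t ^ card A) = (1 + t) ^ card (DB B)" for B
  proof -
    have "(\<Prod>x\<in>DB B. t + 1) = (\<Sum>A\<in>Pow (DB B). (\<Prod>x\<in>A. t) * (\<Prod>x\<in>DB B - A. 1))"
      by (rule prod_add[OF finDB])
    then show ?thesis by (simp add: add.commute)
  qed
  have "1 = (\<Sum>R\<in>Pow U. w R)" using one by simp
  also have "\<dots> \<le> (\<Sum>R\<in>Pow U. \<Sum>B\<in>Bs. \<Sum>A\<in>Pow (DB B). if ind R B A then w R else 0)"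
    by (rule sum_mono) (rule claim3)
  also have "\<dots> = (\<Sum>B\<in>Bs. \<Sum>R\<in>Pow U. \<Sum>A\<in>Pow (DB B). if ind R B A then w R else 0)"
    by (rule sum.swap)
  also have "\<dots> = (\<Sum>B\<in>Bs. \<Sum>A\<in>Pow (DB B). \<Sum>R\<in>Pow U. if ind R B A then w R else 0)"
    by (intro sum.cong refl) (rule sum.swap)
  also have "\<dots> \<le> (\<Sum>B\<in>Bs. \<Sum>A\<in>Pow (DB B). (1-r) ^ card B * t ^ card A)"
    by (intro sum_mono claim4)
  also have "\<dots> = (\<Sum>B\<in>Bs. (1-r) ^ card B * (1 + t) ^ card (DB B))"
    by (simp add: sum_distrib_left[symmetric] claim5)
  also have "\<dots> < 1" using sum_lt unfolding DB_def t_def .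
  finally show False by simp
qed



definition lr :: "bool \<times> nat \<Rightarrow> bool \<times> nat \<Rightarrow> nat \<times> nat" where
  "lr x y = (if fst x then (snd x, snd y) else (snd y, snd x))"

definition emb :: "nat \<Rightarrow> 'a set \<Rightarrow> 'a set set \<Rightarrow> ('a \<Rightarrow> bool \<times> nat) \<Rightarrow> bool" where
  "emb N V E f \<longleftrightarrow> inj_on f V \<and> f ` V \<subseteq> KNN_verts N \<and> (\<forall>u v. {u,v} \<in> E \<longrightarrow> fst (f u) \<noteq> fst (f v))"

definition img :: "'a set set \<Rightarrow> ('a \<Rightarrow> bool \<times> nat) \<Rightarrow> (nat \<times> nat) set" where
  "img E f = {lr (f u) (f v) | u v. {u,v} \<in> E}"

definition cps :: "nat \<Rightarrow> 'a set \<Rightarrow> 'a set set \<Rightarrow> (nat \<times> nat) set set" where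
  "cps N V E = {img E f | f. emb N V E f}"

lemma KNN_eq: "KNN_verts N = UNIV \<times> {..<N}"
  unfolding KNN_verts_def by auto

lemma card_KNN: "card (KNN_verts N) = 2 * N"
  unfolding KNN_eq by (simp add: card_cartesian_product)

lemma finite_KNN: "finite (KNN_verts N)"
  unfolding KNN_eq by simp

lemma red_copy:
  assumes "has_mono_copy N c True V E"
  shows "\<exists>D\<in>cps N V E. \<forall>x\<in>D. c (fst x) (snd x)"
proof -
  obtain f where f: "inj_on f V" "f ` V \<subseteq> KNN_verts N"
    and fe: "\<And>u v. {u, v} \<in> E \<Longrightarrow> fst (f u) \<noteq> fst (f v) \<and> edge_colour c (f u) (f v) = True"
    using assms unfolding has_mono_copy_def by blast
  have "emb N V E f" unfolding emb_def using f fe by blast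
  then have "img E f \<in> cps N V E" unfolding cps_def by blast
  moreover have "\<forall>x\<in>img E f. c (fst x) (snd x)"
  proof
    fix x assume "x \<in> img E f"
    then obtain u v where x: "x = lr (f u) (f v)" and e: "{u,v} \<in> E" unfolding img_def by blast
    from fe[OF e] show "c (fst x) (snd x)"
      unfolding x lr_def edge_colour_def by (cases "fst (f u)") auto
  qed
  ultimately show ?thesis by blast
qed

lemma cps_sub:
  assumes EV: "\<forall>e\<in>E. e \<subseteq> V" and D: "D \<in> cps N V E"
  shows "D \<subseteq> {..<N} \<times> {..<N}"
proof
  fix x assume x: "x \<in> D"
  obtain f where f: "emb N V E f" and Df: "D = img E f" using D unfolding cps_def by blast
  obtain u v where xe: "x = lr (f u) (f v)" and e: "{u,v} \<in> E" using x Df unfolding img_def by blast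
  have "u \<in> V" "v \<in> V" using EV e by auto
  then have "f u \<in> KNN_verts N" "f v \<in> KNN_verts N" using f unfolding emb_def by auto
  then show "x \<in> {..<N} \<times> {..<N}" unfolding xe lr_def KNN_verts_def by auto
qed

lemma cps_card:
  assumes sg: "simple_graph V E" and D: "D \<in> cps N V E"
  shows "card E \<le> card D"
proof -
  have EV: "\<forall>e\<in>E. e \<subseteq> V" and c2: "\<forall>e\<in>E. card e = 2" using sg unfolding simple_graph_def by auto
  obtain f where f: "emb N V E f" and Df: "D = img E f" using D unfolding cps_def by blast
  have inj: "inj_on f V" and fcross: "\<And>u v. {u,v} \<in> E \<Longrightarrow> fst (f u) \<noteq> fst (f v)"
    using f unfolding emb_def by auto
  have finD: "finite D" using cps_sub[OF EV D] finite_subset by blast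
  define h where "h y = {the_inv_into V f (True, fst y), the_inv_into V f (False, snd y)}" for y
  have "E \<subseteq> h ` D"
  proof
    fix e assume e: "e \<in> E"
    then obtain u v where uv: "e = {u,v}" "u \<noteq> v" using c2 card_2_iff by metis
    have uV: "u \<in> V" "v \<in> V" using EV e uv by auto
    have mem: "lr (f u) (f v) \<in> D" unfolding Df img_def using e uv by blast
    have cr: "fst (f u) \<noteq> fst (f v)" using fcross e uv by auto
    have "h (lr (f u) (f v)) = {the_inv_into V f (f u), the_inv_into V f (f v)}"
    proof (cases "fst (f u)")
      case True
      then have "fst (f v) = False" using cr by simp
      then have e1: "f u = (True, snd (f u))" "f v = (False, snd (f v))" using True
        by (simp_all add: prod_eq_iff)
      show ?thesis unfolding h_def lr_def using True by (subst (3 4) e1) simp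
    next
      case False
      then have "fst (f v) = True" using cr by simp
      then have e1: "f v = (True, snd (f v))" "f u = (False, snd (f u))" using False
        by (simp_all add: prod_eq_iff)
      show ?thesis unfolding h_def lr_def using False by (subst (3 4) e1) (simp add: insert_commute)
    qed
    also have "\<dots> = e" using the_inv_into_f_f[OF inj uV(1)] the_inv_into_f_f[OF inj uV(2)] uv by simp
    finally have "h (lr (f u) (f v)) = e" .
    then show "e \<in> h ` D" using mem by force
  qed
  then have "card E \<le> card (h ` D)" using finD by (intro card_mono) auto
  also have "\<dots> \<le> card D" using finD by (rule card_image_le)
  finally show ?thesis .
qed


lemma piece_card:
  assumes V: "finite V" and A: "finite A" and u: "u \<in> V" and v: "v \<in> V" and uv: "u \<noteq> v"
  shows "card {g\<in>V \<rightarrow>\<^sub>E A. g u = a \<and> g v = b} \<le> card A ^ (card V - 2)"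
proof -
  define W where "W = V - {u,v}"
  define Q where "Q = {g\<in>V \<rightarrow>\<^sub>E A. g u = a \<and> g v = b}"
  have "card Q \<le> card (W \<rightarrow>\<^sub>E A)"
  proof (rule card_inj_on_le[where f = "\<lambda>g. restrict g W"])
    show "inj_on (\<lambda>g. restrict g W) Q"
    proof (rule inj_onI)
      fix g1 g2 assume g1: "g1 \<in> Q" and g2: "g2 \<in> Q" and eq: "restrict g1 W = restrict g2 W"
      have g1E: "g1 \<in> V \<rightarrow>\<^sub>E A" "g1 u = a" "g1 v = b" using g1 unfolding Q_def by blast+
      have g2E: "g2 \<in> V \<rightarrow>\<^sub>E A" "g2 u = a" "g2 v = b" using g2 unfolding Q_def by blast+
      show "g1 = g2"
      proof
        fix y
        show "g1 y = g2 y"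
        proof (cases "y \<in> W")
          case True
          have "restrict g1 W y = restrict g2 W y" using eq by (rule arg_cong)
          then show ?thesis using True by simp
        next
          case False
          then consider "y = u" | "y = v" | "y \<notin> V" unfolding W_def by blast
          then show ?thesis
          proof cases
            case 1 then show ?thesis using g1E g2E by simp
          next
            case 2 then show ?thesis using g1E g2E by simp
          next
            case 3 then show ?thesis using PiE_arb[OF g1E(1) 3] PiE_arb[OF g2E(1) 3] by simp
          qed
        qed
      qed
    qed
    show "(\<lambda>g. restrict g W) ` Q \<subseteq> W \<rightarrow>\<^sub>E A"
    proof
      fix h assume "h \<in> (\<lambda>g. restrict g W) ` Q"
      then obtain g where g: "g \<in> Q" and h: "h = restrict g W" by blast
      have "g \<in> V \<rightarrow>\<^sub>E A" using g unfolding Q_def by blast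
      then have "\<forall>i\<in>W. g i \<in> A" unfolding W_def by blast
      then show "h \<in> W \<rightarrow>\<^sub>E A" unfolding h by (simp only: restrict_PiE_iff)
    qed
    have "finite W" using V unfolding W_def by blast
    then show "finite (W \<rightarrow>\<^sub>E A)" using A by (rule finite_PiE)
  qed
  also have "card (W \<rightarrow>\<^sub>E A) = (\<Prod>i\<in>W. card A)"
    using V unfolding W_def by (intro card_PiE) blast
  also have "\<dots> = card A ^ card W" by (rule prod_constant)
  also have "card W = card V - 2"
  proof -
    have "card W = card V - card {u,v}" unfolding W_def using V u v by (intro card_Diff_subset) auto
    then show ?thesis using uv by simp
  qed
  finally show ?thesis unfolding Q_def .
qed

lemma deg_bound:
  assumes V: "finite V" and EV: "\<forall>e\<in>E. e \<subseteq> V"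
  shows "card {D\<in>cps N V E. x \<in> D} \<le> card V * (card V * (2 * (2*N) ^ (card V - 2)))"
proof -
  obtain i j where x: "x = (i,j)" by (cases x)
  define A where "A = KNN_verts N"
  define P where "P = (2*N) ^ (card V - 2)"
  define AB where "AB = {((True,i),(False,j)), ((False,j),(True,i))}"
  define G where "G = (\<Union>u\<in>V. \<Union>v\<in>V-{u}. \<Union>ab\<in>AB. {g\<in>V \<rightarrow>\<^sub>E A. g u = fst ab \<and> g v = snd ab})"
  have finA: "finite A" unfolding A_def by (rule finite_KNN)
  have finG: "finite G"
  proof (rule finite_subset)
    show "G \<subseteq> V \<rightarrow>\<^sub>E A" unfolding G_def by auto
    show "finite (V \<rightarrow>\<^sub>E A)" using V finA by (intro finite_PiE) auto
  qed
  have sub: "{D\<in>cps N V E. x \<in> D} \<subseteq> img E ` G"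
  proof
    fix D assume "D \<in> {D\<in>cps N V E. x \<in> D}"
    then obtain f where f: "emb N V E f" and Df: "D = img E f" and xD: "x \<in> D" unfolding cps_def by blast
    obtain u v where xe: "x = lr (f u) (f v)" and e: "{u,v} \<in> E" using xD Df unfolding img_def by blast
    have uV: "u \<in> V" "v \<in> V" using EV e by auto
    have cr: "fst (f u) \<noteq> fst (f v)" using f e unfolding emb_def by blast
    then have uv: "u \<noteq> v" by auto
    define g where "g = restrict f V"
    have gA: "g \<in> V \<rightarrow>\<^sub>E A" using f unfolding g_def emb_def A_def by auto
    have "img E g = img E f"
    proof -
      have "\<forall>u v. {u,v} \<in> E \<longrightarrow> lr (g u) (g v) = lr (f u) (f v)" using EV unfolding g_def by auto
      note H = this
      show ?thesis unfolding img_def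
      proof (intro set_eqI iffI)
        fix y assume "y \<in> {lr (g u) (g v) |u v. {u, v} \<in> E}"
        then obtain u v where "y = lr (g u) (g v)" "{u,v} \<in> E" by blast
        then have "y = lr (f u) (f v) \<and> {u,v} \<in> E" using H by auto
        then show "y \<in> {lr (f u) (f v) |u v. {u, v} \<in> E}" by blast
      next
        fix y assume "y \<in> {lr (f u) (f v) |u v. {u, v} \<in> E}"
        then obtain u v where "y = lr (f u) (f v)" "{u,v} \<in> E" by blast
        then have "y = lr (g u) (g v) \<and> {u,v} \<in> E" using H by auto
        then show "y \<in> {lr (g u) (g v) |u v. {u, v} \<in> E}" by blast
      qed
    qed
    have AB: "(g u, g v) \<in> AB"
    proof (cases "fst (f u)")
      case True
      then have "fst (f v) = False" using cr by simp
      then have "f u = (True, i) \<and> f v = (False, j)" using True xe x unfolding lr_def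
        by (simp add: prod_eq_iff)
      then show ?thesis unfolding AB_def g_def using uV by simp
    next
      case False
      then have "fst (f v) = True" using cr by simp
      then have "f v = (True, i) \<and> f u = (False, j)" using False xe x unfolding lr_def
        by (simp add: prod_eq_iff)
      then show ?thesis unfolding AB_def g_def using uV by simp
    qed
    have "g \<in> G" unfolding G_def
      by (rule UN_I[of u], rule uV, rule UN_I[of v], use uV uv in simp, rule UN_I[OF AB]) (use gA in simp)
    show "D \<in> img E ` G" by (rule image_eqI[where x=g]) (use Df \<open>img E g = img E f\<close> \<open>g \<in> G\<close> in auto)
  qed
  have "card {D\<in>cps N V E. x \<in> D} \<le> card (img E ` G)"
    using finG sub by (intro card_mono) auto
  also have "\<dots> \<le> card G" using finG by (rule card_image_le)
  also have "\<dots> \<le> (\<Sum>u\<in>V. card (\<Union>v\<in>V-{u}. \<Union>ab\<in>AB. {g\<in>V \<rightarrow>\<^sub>E A. g u = fst ab \<and> g v = snd ab}))"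
    unfolding G_def using V by (rule card_UN_le)
  also have "\<dots> \<le> (\<Sum>u\<in>V. card V * (2 * P))"
  proof (rule sum_mono)
    fix u assume u: "u \<in> V"
    have "card (\<Union>v\<in>V-{u}. \<Union>ab\<in>AB. {g\<in>V \<rightarrow>\<^sub>E A. g u = fst ab \<and> g v = snd ab})
        \<le> (\<Sum>v\<in>V-{u}. card (\<Union>ab\<in>AB. {g\<in>V \<rightarrow>\<^sub>E A. g u = fst ab \<and> g v = snd ab}))"
      using V by (intro card_UN_le) auto
    also have "\<dots> \<le> (\<Sum>v\<in>V-{u}. 2 * P)"
    proof (rule sum_mono)
      fix v assume v: "v \<in> V - {u}"
      have "card (\<Union>ab\<in>AB. {g\<in>V \<rightarrow>\<^sub>E A. g u = fst ab \<and> g v = snd ab})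
          \<le> (\<Sum>ab\<in>AB. card {g\<in>V \<rightarrow>\<^sub>E A. g u = fst ab \<and> g v = snd ab})"
        unfolding AB_def by (intro card_UN_le) auto
      also have "\<dots> \<le> (\<Sum>ab\<in>AB. P)"
      proof (rule sum_mono)
        fix ab assume "ab \<in> AB"
        have "card {g\<in>V \<rightarrow>\<^sub>E A. g u = fst ab \<and> g v = snd ab} \<le> card A ^ (card V - 2)"
          using v by (intro piece_card[OF V finA u]) auto
        also have "card A = 2 * N" unfolding A_def by (rule card_KNN)
        finally show "card {g\<in>V \<rightarrow>\<^sub>E A. g u = fst ab \<and> g v = snd ab} \<le> P" unfolding P_def .
      qed
      also have "\<dots> \<le> 2 * P" unfolding AB_def by (simp add: card_insert_if)
      finally show "card (\<Union>ab\<in>AB. {g\<in>V \<rightarrow>\<^sub>E A. g u = fst ab \<and> g v = snd ab}) \<le> 2 * P" .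
    qed
    also have "\<dots> = card (V - {u}) * (2 * P)" by simp
    also have "\<dots> \<le> card V * (2 * P)" using V by (intro mult_right_mono card_mono) auto
    finally show "card (\<Union>v\<in>V-{u}. \<Union>ab\<in>AB. {g\<in>V \<rightarrow>\<^sub>E A. g u = fst ab \<and> g v = snd ab}) \<le> card V * (2 * P)" .
  qed
  also have "\<dots> = card V * (card V * (2 * P))" by simp
  finally show ?thesis unfolding P_def .
qed



lemma blue_copy:
  assumes "has_mono_copy N c False (Kbip_V n) (Kbip_E n)" and n1: "n \<ge> 1"
  shows "\<exists>S T. S \<subseteq> {..<N} \<and> T \<subseteq> {..<N} \<and> card S = n \<and> card T = n \<and> (\<forall>i\<in>S. \<forall>j\<in>T. \<not> c i j)"
proof -
  obtain f where inj: "inj_on f (Kbip_V n)" and fV: "f ` Kbip_V n \<subseteq> KNN_verts N"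
    and fe: "\<And>u v. {u,v} \<in> Kbip_E n \<Longrightarrow> fst (f u) \<noteq> fst (f v) \<and> edge_colour c (f u) (f v) = False"
    using assms(1) unfolding has_mono_copy_def by blast
  have edge: "{(True,k),(False,l)} \<in> Kbip_E n" if "k < n" "l < n" for k l
    unfolding Kbip_E_def using that by force
  have inV: "(b,k) \<in> Kbip_V n" if "k < n" for b k unfolding Kbip_V_def using that by simp
  define s where "s = fst (f (True,0))"
  have sT: "fst (f (True,k)) = s" if "k < n" for k
    using fe[OF edge[OF that, of 0]] fe[OF edge[of 0 0]] n1 unfolding s_def by auto
  have sF: "fst (f (False,l)) = (\<not> s)" if "l < n" for l
    using fe[OF edge[of 0 l]] that n1 unfolding s_def by auto
  define g1 where "g1 k = snd (f (True,k))" for k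
  define g2 where "g2 l = snd (f (False,l))" for l
  have inj1: "inj_on g1 {..<n}"
  proof (rule inj_onI)
    fix k k' assume k: "k \<in> {..<n}" "k' \<in> {..<n}" and eq: "g1 k = g1 k'"
    then have "f (True,k) = f (True,k')" using sT unfolding g1_def by (simp add: prod_eq_iff)
    then show "k = k'" using inj inV k unfolding inj_on_def by blast
  qed
  have inj2: "inj_on g2 {..<n}"
  proof (rule inj_onI)
    fix k k' assume k: "k \<in> {..<n}" "k' \<in> {..<n}" and eq: "g2 k = g2 k'"
    then have "f (False,k) = f (False,k')" using sF unfolding g2_def by (simp add: prod_eq_iff)
    then show "k = k'" using inj inV k unfolding inj_on_def by blast
  qed
  have r1: "g1 ` {..<n} \<subseteq> {..<N}" using fV inV unfolding g1_def KNN_verts_def by force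
  have r2: "g2 ` {..<n} \<subseteq> {..<N}" using fV inV unfolding g2_def KNN_verts_def by force
  have c1: "card (g1 ` {..<n}) = n" using inj1 by (simp add: card_image)
  have c2: "card (g2 ` {..<n}) = n" using inj2 by (simp add: card_image)
  have col: "if s then \<not> c (g1 k) (g2 l) else \<not> c (g2 l) (g1 k)" if "k < n" "l < n" for k l
    using fe[OF edge[OF that]] sT[OF that(1)] unfolding edge_colour_def g1_def g2_def
    by (cases s) auto
  show ?thesis
  proof (cases s)
    case True
    have "\<forall>i\<in>g1 ` {..<n}. \<forall>j\<in>g2 ` {..<n}. \<not> c i j" using col True by auto
    then show ?thesis using r1 r2 c1 c2 by blast
  next
    case False
    have "\<forall>i\<in>g2 ` {..<n}. \<forall>j\<in>g1 ` {..<n}. \<not> c i j" using col False by fastforce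
    then show ?thesis using r1 r2 c1 c2 by blast
  qed
qed

lemma mono_copy_le:
  assumes "m \<le> N" "has_mono_copy m c col V E"
  shows "has_mono_copy N c col V E"
proof -
  have "KNN_verts m \<subseteq> KNN_verts N" using assms(1) unfolding KNN_verts_def by auto
  moreover obtain f where f: "inj_on f V" "f ` V \<subseteq> KNN_verts m"
    "\<forall>u v. {u, v} \<in> E \<longrightarrow> fst (f u) \<noteq> fst (f v) \<and> edge_colour c (f u) (f v) = col"
    using assms(2) unfolding has_mono_copy_def by blast
  ultimately have "f ` V \<subseteq> KNN_verts N" by (rule_tac order.trans) auto
  then show ?thesis unfolding has_mono_copy_def using f(1,3) by blast
qed

lemma mono_Kmm:
  "\<exists>N. \<forall>c::nat\<Rightarrow>nat\<Rightarrow>bool. \<exists>S T col. S \<subseteq> {..<N} \<and> T \<subseteq> {..<N} \<and> card S = m \<and> card T = m \<and>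
      (\<forall>i\<in>S. \<forall>j\<in>T. c i j = col)"
proof -
  obtain N :: nat where N: "partn_lst {..<N} [2*m, 2*m] 2" using ramsey_full[of "[2*m, 2*m]" 2] by blast
  have "\<exists>S T col. S \<subseteq> {..<N} \<and> T \<subseteq> {..<N} \<and> card S = m \<and> card T = m \<and> (\<forall>i\<in>S. \<forall>j\<in>T. c i j = col)"
    for c :: "nat \<Rightarrow> nat \<Rightarrow> bool"
  proof -
    define F where "F e = (if c (Min e) (Max e) then 0 else 1::nat)" for e
    have Fin: "F \<in> nsets {..<N} 2 \<rightarrow> {..<length [2*m, 2*m]}" unfolding F_def by auto
    have "\<exists>i < length [2*m, 2*m]. monochromatic {..<N} ([2*m,2*m]!i) 2 F i"
      using N Fin unfolding partn_lst_def by blast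
    then obtain i where i0: "i < length [2*m, 2*m]" and mono: "monochromatic {..<N} ([2*m,2*m]!i) 2 F i"
      by blast
    have i: "i < 2" using i0 by simp
    have "[2*m,2*m]!i = 2*m" using i by (cases i) auto
    then obtain H where H: "H \<in> nsets {..<N} (2*m)" and FH: "F ` nsets H 2 \<subseteq> {i}"
      using mono unfolding monochromatic_def by auto
    have Hs: "H \<subseteq> {..<N}" "finite H" "card H = 2*m" using H unfolding nsets_def by auto
    obtain xs where xs: "sorted_wrt (<) xs" "set xs = H"
      using ex1_sorted_list_for_set_if_finite[OF Hs(2)] by blast
    have dxs: "distinct xs" using xs(1) strict_sorted_iff by blast
    have lxs: "length xs = 2*m" using distinct_card[OF dxs] xs(2) Hs(3) by simp
    define S where "S = set (take m xs)"
    define T where "T = set (drop m xs)"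
    have ST: "S \<subseteq> H" "T \<subseteq> H" unfolding S_def T_def using xs(2) by (auto dest: in_set_takeD in_set_dropD)
    have cS: "card S = m" unfolding S_def using dxs lxs by (subst distinct_card) auto
    have cT: "card T = m" unfolding T_def using dxs lxs by (subst distinct_card) auto
    have lt: "\<forall>s\<in>S. \<forall>t\<in>T. s < t"
    proof -
      have "sorted_wrt (<) (take m xs @ drop m xs)" using xs(1) by simp
      then show ?thesis unfolding S_def T_def sorted_wrt_append by blast
    qed
    have "\<forall>s\<in>S. \<forall>t\<in>T. c s t = (i = 0)"
    proof (intro ballI)
      fix s t assume s: "s \<in> S" and t: "t \<in> T"
      have st: "s < t" using lt s t by blast
      have "{s,t} \<in> nsets H 2" using ST s t st Hs unfolding nsets_def by (auto simp: card_insert_if)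
      then have "F {s,t} = i" using FH by blast
      moreover have "Min {s,t} = s" "Max {s,t} = t" using st by auto
      ultimately show "c s t = (i = 0)" unfolding F_def by (auto split: if_splits)
    qed
    then show ?thesis using ST Hs cS cT by (intro exI[of _ S] exI[of _ T] exI[of _ "i = 0"]) auto
  qed
  then show ?thesis by blast
qed

lemma ramsey_ex:
  assumes bg: "bipartite_graph V E"
  shows "\<exists>N. \<forall>c. has_mono_copy N c True V E \<or> has_mono_copy N c False (Kbip_V n) (Kbip_E n)"
proof -
  have finV: "finite V" and EV: "\<forall>e\<in>E. e \<subseteq> V \<and> card e = 2"
    using bg unfolding bipartite_graph_def simple_graph_def by auto
  obtain X where X: "X \<subseteq> V" "\<forall>e\<in>E. card (e \<inter> X) = 1" using bg unfolding bipartite_graph_def by auto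
  define m where "m = max (card V) n"
  obtain N :: nat where N: "\<forall>c::nat\<Rightarrow>nat\<Rightarrow>bool. \<exists>S T col. S \<subseteq> {..<N} \<and> T \<subseteq> {..<N} \<and> card S = m \<and> card T = m \<and>
      (\<forall>i\<in>S. \<forall>j\<in>T. c i j = col)" using mono_Kmm[of m] by blast
  have "has_mono_copy N c True V E \<or> has_mono_copy N c False (Kbip_V n) (Kbip_E n)" for c
  proof -
    have "\<exists>S T col. S \<subseteq> {..<N} \<and> T \<subseteq> {..<N} \<and> card S = m \<and> card T = m \<and>
      (\<forall>i\<in>S. \<forall>j\<in>T. c i j = col)" using N by (rule spec)
    then obtain S T col where S: "S \<subseteq> {..<N}" and T: "T \<subseteq> {..<N}" and cS: "card S = m" and cT: "card T = m"
      and col: "\<forall>i\<in>S. \<forall>j\<in>T. c i j = col" by auto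
    have finS: "finite S" and finT: "finite T" using S T finite_subset by auto
    show ?thesis
    proof (cases col)
      case True
      obtain h1 where h1: "h1 ` V \<subseteq> S" "inj_on h1 V"
        using card_le_inj[OF finV finS] cS unfolding m_def by auto
      obtain h2 where h2: "h2 ` V \<subseteq> T" "inj_on h2 V"
        using card_le_inj[OF finV finT] cT unfolding m_def by auto
      define f where "f u = (if u \<in> X then (True, h1 u) else (False, h2 u))" for u
      have "inj_on f V" using h1 h2 unfolding f_def inj_on_def by auto
      moreover have "f ` V \<subseteq> KNN_verts N"
      proof -
        have "h1 ` V \<subseteq> {..<N}" using h1(1) S by (rule subset_trans)
        moreover have "h2 ` V \<subseteq> {..<N}" using h2(1) T by (rule subset_trans)
        ultimately show ?thesis unfolding f_def KNN_verts_def by auto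
      qed
      moreover have "fst (f u) \<noteq> fst (f v) \<and> edge_colour c (f u) (f v) = True" if e: "{u,v} \<in> E" for u v
      proof -
        have uv: "u \<noteq> v" using EV e by fastforce
        have uvV: "u \<in> V" "v \<in> V" using EV e by auto
        have "card ({u,v} \<inter> X) = 1" using X e by blast
        then have "(u \<in> X \<and> v \<notin> X) \<or> (u \<notin> X \<and> v \<in> X)" using uv
          by (cases "u \<in> X"; cases "v \<in> X") (auto simp: card_insert_if)
        moreover have "h1 u \<in> S" "h1 v \<in> S" "h2 u \<in> T" "h2 v \<in> T"
          using h1(1) h2(1) uvV by (auto simp: image_subset_iff)
        ultimately show ?thesis using col True unfolding f_def edge_colour_def by auto
      qed
      ultimately have "has_mono_copy N c True V E" unfolding has_mono_copy_def by blast
      then show ?thesis by blast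
    next
      case False
      have fin_n: "finite {..<n}" by simp
      obtain h1 where h1: "h1 ` {..<n} \<subseteq> S" "inj_on h1 {..<n}"
        using card_le_inj[OF fin_n finS] cS unfolding m_def by auto
      obtain h2 where h2: "h2 ` {..<n} \<subseteq> T" "inj_on h2 {..<n}"
        using card_le_inj[OF fin_n finT] cT unfolding m_def by auto
      define f where "f x = (fst x, if fst x then h1 (snd x) else h2 (snd x))" for x :: "bool \<times> nat"
      have "inj_on f (Kbip_V n)"
      proof (rule inj_onI)
        fix x y assume x: "x \<in> Kbip_V n" and y: "y \<in> Kbip_V n" and eq: "f x = f y"
        then have fx: "fst x = fst y" unfolding f_def by simp
        have "snd x < n" "snd y < n" using x y unfolding Kbip_V_def by auto
        then have "snd x = snd y" using eq fx h1 h2 unfolding f_def inj_on_def by (cases "fst x") auto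
        then show "x = y" using fx by (simp add: prod_eq_iff)
      qed
      moreover have "f ` Kbip_V n \<subseteq> KNN_verts N" using h1 h2 S T unfolding f_def KNN_verts_def Kbip_V_def by force
      moreover have "fst (f x) \<noteq> fst (f y) \<and> edge_colour c (f x) (f y) = False" if e: "{x,y} \<in> Kbip_E n" for x y
      proof -
        obtain a b where ab: "{x,y} = {a,b}" "snd a < n" "snd b < n" "fst a \<noteq> fst b"
          using e unfolding Kbip_E_def by blast
        then have xy: "snd x < n" "snd y < n" "fst x \<noteq> fst y" by (auto simp: doubleton_eq_iff)
        have "h1 (snd x) \<in> S" "h1 (snd y) \<in> S" "h2 (snd x) \<in> T" "h2 (snd y) \<in> T"
          using h1(1) h2(1) xy by (auto simp: image_subset_iff)
        then show ?thesis using col False xy unfolding f_def edge_colour_def by (cases "fst x") auto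
      qed
      ultimately have "has_mono_copy N c False (Kbip_V n) (Kbip_E n)" unfolding has_mono_copy_def by blast
      then show ?thesis by blast
    qed
  qed
  then show ?thesis by blast
qed

lemma br_gt:
  assumes bg: "bipartite_graph V E"
    and cc: "\<not> has_mono_copy N c True V E" "\<not> has_mono_copy N c False (Kbip_V n) (Kbip_E n)"
  shows "N < bip_ramsey V E (Kbip_V n) (Kbip_E n)"
proof -
  let ?P = "\<lambda>N. \<forall>c. has_mono_copy N c True V E \<or> has_mono_copy N c False (Kbip_V n) (Kbip_E n)"
  have PL: "?P (Least ?P)" using ramsey_ex[OF bg] by (rule LeastI_ex)
  have notP: "\<not> ?P m" if m: "m \<le> N" for m
  proof
    assume "?P m"
    then have "has_mono_copy m c True V E \<or> has_mono_copy m c False (Kbip_V n) (Kbip_E n)" by blast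
    then show False using cc mono_copy_le[OF m, of c True V E] mono_copy_le[OF m, of c False "Kbip_V n" "Kbip_E n"] by blast
  qed
  show ?thesis unfolding bip_ramsey_def
  proof (rule ccontr)
    assume "\<not> N < (LEAST N. ?P N)"
    then have "(LEAST N. ?P N) \<le> N" by simp
    then have "\<not> ?P (LEAST N. ?P N)" by (rule notP)
    then show False using PL by blast
  qed
qed



lemma good_col:
  fixes V :: "'a set" and E :: "'a set set"
  assumes sg: "simple_graph V E" and q1: "card E \<ge> 1" and n1: "n \<ge> 1"
    and r0: "0 < r" and r1: "r \<le> 1/2"
    and K: "K = card V * (card V * (2 * (2*N) ^ (card V - 2)))"
    and ineq: "real ((N choose n) * (N choose n)) * ((1-r) ^ (n*n) * (1 + (r/(1-r)) ^ card E) ^ (n*n*K)) < 1"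
  shows "\<exists>c. \<not> has_mono_copy N c True V E \<and> \<not> has_mono_copy N c False (Kbip_V n) (Kbip_E n)"
proof -
  have finV: "finite V" and EV: "\<forall>e\<in>E. e \<subseteq> V" using sg unfolding simple_graph_def by auto
  define U where "U = {..<N} \<times> {..<N}"
  define Ds where "Ds = cps N V E"
  define SS where "SS = {S. S \<subseteq> {..<N} \<and> card S = n}"
  define Bs where "Bs = (\<lambda>(S,T). S \<times> T) ` (SS \<times> SS)"
  define t where "t = (r/(1-r)) ^ card E"
  define X where "X = (1-r) ^ (n*n) * (1 + t) ^ (n*n*K)"
  have finU: "finite U" unfolding U_def by simp
  have DsU: "Ds \<subseteq> Pow U" unfolding Ds_def U_def using cps_sub[OF EV] by blast
  have BsU: "Bs \<subseteq> Pow U" unfolding Bs_def SS_def U_def by auto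
  have cardD: "\<forall>D\<in>Ds. card D \<ge> card E" unfolding Ds_def using cps_card[OF sg] by blast
  have t0: "t \<ge> 0" unfolding t_def using r0 r1 by simp
  have X0: "X \<ge> 0" unfolding X_def using r1 t0 by simp
  have cSS: "card SS = N choose n" unfolding SS_def using n_subsets[of "{..<N}" n] by simp
  have cBs: "card Bs \<le> (N choose n) * (N choose n)"
  proof -
    have "card Bs \<le> card (SS \<times> SS)" unfolding Bs_def by (rule card_image_le) (simp add: SS_def)
    also have "\<dots> = (N choose n) * (N choose n)" by (simp add: card_cartesian_product cSS)
    finally show ?thesis .
  qed
  have finDs: "finite Ds" using DsU finU by (meson finite_Pow_iff finite_subset)
  have trm: "(1-r) ^ card B * (1 + t) ^ card {D\<in>Ds. D \<inter> B \<noteq> {}} \<le> X" if B: "B \<in> Bs" for B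
  proof -
    obtain S T where ST: "S \<in> SS" "T \<in> SS" "B = S \<times> T" using B unfolding Bs_def by auto
    have finB: "finite B" using ST unfolding SS_def by (auto dest: finite_subset)
    have cB: "card B = n * n" using ST unfolding SS_def by (simp add: card_cartesian_product)
    have "card {D\<in>Ds. D \<inter> B \<noteq> {}} \<le> card (\<Union>x\<in>B. {D\<in>Ds. x \<in> D})"
      using finB finDs by (intro card_mono) auto
    also have "\<dots> \<le> (\<Sum>x\<in>B. card {D\<in>Ds. x \<in> D})" using finB by (rule card_UN_le)
    also have "\<dots> \<le> (\<Sum>x\<in>B. K)" unfolding Ds_def K using deg_bound[OF finV EV] by (intro sum_mono) blast
    also have "\<dots> = n * n * K" using cB by simp
    finally have cD: "card {D\<in>Ds. D \<inter> B \<noteq> {}} \<le> n * n * K" .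
    have "(1 + t) ^ card {D\<in>Ds. D \<inter> B \<noteq> {}} \<le> (1 + t) ^ (n*n*K)"
      using t0 cD by (intro power_increasing) auto
    then show ?thesis unfolding X_def cB using r1 by (intro mult_left_mono) auto
  qed
  have "(\<Sum>B\<in>Bs. (1-r) ^ card B * (1 + t) ^ card {D\<in>Ds. D \<inter> B \<noteq> {}}) \<le> real (card Bs) * X"
    using sum_bounded_above[of Bs _ X] trm by auto
  also have "\<dots> \<le> real ((N choose n) * (N choose n)) * X"
    using cBs X0 by (intro mult_right_mono) (simp_all only: of_nat_le_iff)
  also have "\<dots> < 1" using ineq unfolding X_def t_def .
  finally have slt: "(\<Sum>B\<in>Bs. (1-r) ^ card B * (1 + (r/(1-r)) ^ card E) ^ card {D\<in>Ds. D \<inter> B \<noteq> {}}) < 1"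
    unfolding t_def .
  obtain R' where R': "R' \<subseteq> U" "\<forall>D\<in>Ds. \<not> D \<subseteq> R'" "\<forall>B\<in>Bs. B \<inter> R' \<noteq> {}"
    using core[OF finU DsU BsU q1 cardD r0 r1 slt] by blast
  define c where "c i j = ((i,j) \<in> R')" for i j
  have "\<not> has_mono_copy N c True V E"
  proof
    assume "has_mono_copy N c True V E"
    from red_copy[OF this] obtain D where "D \<in> cps N V E" "\<forall>x\<in>D. c (fst x) (snd x)" by blast
    then have "D \<in> Ds" "D \<subseteq> R'" unfolding Ds_def c_def by auto
    then show False using R'(2) by blast
  qed
  moreover have "\<not> has_mono_copy N c False (Kbip_V n) (Kbip_E n)"
  proof
    assume "has_mono_copy N c False (Kbip_V n) (Kbip_E n)"
    from blue_copy[OF this n1] obtain S T where ST: "S \<subseteq> {..<N}" "T \<subseteq> {..<N}" "card S = n" "card T = n"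
      "\<forall>i\<in>S. \<forall>j\<in>T. \<not> c i j" by blast
    have "S \<times> T \<in> Bs" unfolding Bs_def SS_def using ST by force
    moreover have "(S \<times> T) \<inter> R' = {}" using ST(5) unfolding c_def by auto
    ultimately show False using R'(3) by blast
  qed
  ultimately show ?thesis by blast
qed



lemma real_part:
  fixes p q n N K :: nat and Kr a b c0 x r :: real
  assumes p3: "p \<ge> 3" and q2: "q \<ge> 2" and Kr1: "Kr \<ge> 1"
    and a_def: "a = (real q - 1) / (real p - 2)" and b_def: "b = 4 * a + 4"
    and c_def: "c0 = (1 / (2 ^ (q+1) * Kr * b ^ (q-1))) powr (1 / (real p - 2))"
    and n16: "real n \<ge> 16 * b^2" and n3: "n \<ge> 3"
    and x_def: "x = real n / ln (real n)" and N_def: "N = nat \<lfloor>c0 * x powr a\<rfloor>"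
    and r_def: "r = b * ln (real n) / real n"
    and K: "real K \<le> Kr * real N ^ (p-2)"
  shows "0 < r \<and> r \<le> 1/2 \<and>
    real ((N choose n) * (N choose n)) * ((1-r) ^ (n*n) * (1 + (r/(1-r)) ^ q) ^ (n*n*K)) < 1"
proof -
  have pr: "real p - 2 > 0" using p3 by simp
  have pr': "real (p - 2) = real p - 2" using p3 by simp
  have a0: "a > 0" unfolding a_def using q2 pr by simp
  have b4: "b \<ge> 4" unfolding b_def using a0 by simp
  have nr: "real n \<ge> 3" using n3 by simp
  have e3: "exp 1 \<le> (3::real)" using exp_le by simp
  have "ln (exp 1) \<le> ln (real n)" using e3 nr by (subst ln_le_cancel_iff) auto
  then have ln1: "ln (real n) \<ge> 1" by simp
  have x0: "x > 0" unfolding x_def using ln1 nr by simp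
  have xn: "x \<le> real n" unfolding x_def using ln1 nr by (simp add: divide_le_eq)
  have r_eq: "r = b / x" unfolding r_def x_def using ln1 nr by simp
  have r0: "r > 0" using r_eq b4 x0 by simp
  have r_half: "r \<le> 1/2"
  proof -
    have sn: "sqrt (real n) > 0" using nr by simp
    have "ln (sqrt (real n)) \<le> sqrt (real n) - 1" using sn by (rule ln_le_minus_one)
    moreover have "ln (sqrt (real n)) = ln (real n) / 2" using nr by (simp add: ln_sqrt)
    ultimately have lnle: "ln (real n) \<le> 2 * sqrt (real n)" by simp
    have "sqrt (16 * b^2) \<le> sqrt (real n)" using n16 by (rule real_sqrt_le_mono)
    moreover have "sqrt (16 * b^2) = 4 * b" using b4 by (simp add: real_sqrt_mult)
    ultimately have s4: "4 * b \<le> sqrt (real n)" by simp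
    have nsq: "real n = sqrt (real n) * sqrt (real n)" using nr by simp
    have "r \<le> b * (2 * sqrt (real n)) / real n"
      unfolding r_def using lnle b4 nr by (intro divide_right_mono mult_left_mono) auto
    also have "\<dots> = 2 * b / sqrt (real n)" using sn by (subst nsq) (simp add: field_simps)
    also have "\<dots> \<le> 1/2" using s4 sn b4 by (simp add: field_simps)
    finally show ?thesis .
  qed
  define d where "d = 2 ^ (q+1) * Kr * b ^ (q-1)"
  have d1: "d \<ge> 1"
  proof -
    have "(1::real) \<le> 2 ^ (q+1)" by (rule one_le_power) simp
    moreover have "(1::real) \<le> b ^ (q-1)" using b4 by (simp add: one_le_power)
    ultimately show ?thesis unfolding d_def using Kr1
      by (metis mult_mono' mult_1 order.trans zero_le_one)
  qed
  have c0_pos: "c0 > 0" unfolding c_def d_def[symmetric] using d1 by simp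
  have c0_le1: "c0 \<le> 1"
  proof -
    have "c0 \<le> 1 powr (1 / (real p - 2))" unfolding c_def d_def[symmetric]
      using d1 pr by (intro powr_mono2) auto
    then show ?thesis by simp
  qed
  have c0pow: "c0 ^ (p-2) = 1 / d"
  proof -
    have "c0 ^ (p-2) = c0 powr (real (p-2))" using c0_pos by (simp add: powr_realpow)
    also have "\<dots> = (1/d) powr (1 / (real p - 2) * (real p - 2))"
      unfolding c_def d_def[symmetric] pr' by (simp add: powr_powr)
    also have "\<dots> = 1/d" using pr d1 by simp
    finally show ?thesis .
  qed
  define y where "y = c0 * x powr a"
  have y0: "y \<ge> 0" unfolding y_def using c0_pos by simp
  have Ny: "real N \<le> y" unfolding N_def y_def[symmetric] using y0
    by (simp add: of_nat_nat)
  have ypow: "y ^ (p-2) = x ^ (q-1) / d"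
  proof -
    have "(x powr a) ^ (p-2) = x powr (a * real (p-2))" using x0 by (simp add: powr_realpow[symmetric] powr_powr)
    also have "a * real (p-2) = real (q-1)" unfolding a_def pr' using pr q2 by (simp add: of_nat_diff)
    also have "x powr real (q-1) = x ^ (q-1)" using x0 by (simp add: powr_realpow)
    finally show ?thesis unfolding y_def using c0pow by (simp add: power_mult_distrib)
  qed
  define t where "t = (r/(1-r)) ^ q"
  have t0: "t \<ge> 0" unfolding t_def using r0 r_half by simp
  have t_le: "t \<le> 2 ^ q * r ^ q"
  proof -
    have "r/(1-r) \<le> 2 * r" using r0 r_half by (simp add: field_simps)
    then have "t \<le> (2*r) ^ q" unfolding t_def using r0 r_half by (intro power_mono) auto
    then show ?thesis by (simp add: power_mult_distrib)
  qed
  have tK: "t * real K \<le> r / 2"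
  proof -
    have "real N ^ (p-2) \<le> y ^ (p-2)" using Ny by (intro power_mono) auto
    have "t * real K \<le> (2 ^ q * r ^ q) * (Kr * y ^ (p-2))"
    proof (intro mult_mono t_le)
      show "real K \<le> Kr * y ^ (p-2)"
        using K Ny Kr1 by (meson le_trans mult_left_mono power_mono of_nat_0_le_iff order.trans zero_le_one)
    qed (use r0 Kr1 y0 t0 in auto)
    also have "\<dots> = 2 ^ q * r * (r ^ (q-1) * x ^ (q-1)) * Kr / d"
    proof -
      have "r ^ q = r * r ^ (q-1)" using q2 by (metis Suc_diff_1 le_trans one_le_numeral not_one_le_zero not_less power_Suc zero_less_iff_neq_zero)
      then show ?thesis unfolding ypow by (simp add: field_simps)
    qed
    also have "r ^ (q-1) * x ^ (q-1) = b ^ (q-1)" unfolding r_eq using x0 by (simp add: power_mult_distrib[symmetric])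
    also have "2 ^ q * r * b ^ (q-1) * Kr / d = r / 2" unfolding d_def using Kr1 b4 by (simp add: field_simps)
    finally show ?thesis .
  qed
  define M where "M = n * n"
  have Y: "(1-r) ^ M * (1 + t) ^ (M*K) \<le> exp (- r * real M / 2)"
  proof -
    have "(1-r) ^ M \<le> exp (-r) ^ M" using r_half by (intro power_mono) (auto simp: exp_ge_add_one_self[of "-r", simplified])
    moreover have "(1+t) ^ (M*K) \<le> exp t ^ (M*K)" using t0 by (intro power_mono) (auto simp: add.commute exp_ge_add_one_self)
    ultimately have "(1-r) ^ M * (1 + t) ^ (M*K) \<le> exp (-r) ^ M * exp t ^ (M*K)"
      using r_half t0 by (intro mult_mono) auto
    also have "\<dots> = exp (- r * real M + t * real K * real M)"
      by (simp add: exp_of_nat_mult[symmetric] mult_ac exp_add[symmetric])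
    also have "\<dots> \<le> exp (- r * real M / 2)"
    proof -
      have "t * real K * real M \<le> r / 2 * real M" by (rule mult_right_mono[OF tK]) simp
      then show ?thesis by simp
    qed
    finally show ?thesis .
  qed
  have Nn: "real N \<le> real n powr a"
  proof -
    have "y \<le> 1 * real n powr a" unfolding y_def
      using c0_le1 c0_pos x0 xn a0 by (intro mult_mono powr_mono2) auto
    then show ?thesis using Ny by simp
  qed
  have Cb: "real ((N choose n) * (N choose n)) \<le> exp (2 * a * real n * ln (real n))"
  proof -
    have "N choose n \<le> N ^ n" by (cases "n \<le> N") (auto simp: binomial_le_pow binomial_eq_0)
    then have "real ((N choose n) * (N choose n)) \<le> real (N ^ n * N ^ n)" by (intro of_nat_mono mult_mono) auto
    also have "\<dots> = real N ^ (2*n)" by (simp add: power_add[symmetric] mult_2)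
    also have "\<dots> \<le> (real n powr a) ^ (2*n)" using Nn by (intro power_mono) auto
    also have "\<dots> = exp (2 * a * real n * ln (real n))"
      using nr by (simp add: powr_realpow[symmetric] powr_powr powr_def mult_ac)
    finally show ?thesis .
  qed
  have "real ((N choose n) * (N choose n)) * ((1-r) ^ (n*n) * (1 + (r/(1-r)) ^ q) ^ (n*n*K))
      \<le> exp (2 * a * real n * ln (real n)) * exp (- r * real M / 2)"
  proof (rule mult_mono)
    show "0 \<le> (1-r) ^ (n*n) * (1 + (r/(1-r)) ^ q) ^ (n*n*K)"
      using r_half t0 unfolding t_def by (intro mult_nonneg_nonneg zero_le_power) auto
  qed (use Cb Y in \<open>auto simp: M_def t_def\<close>)
  also have "\<dots> = exp (- 2 * real n * ln (real n))"
  proof -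
    have "r * real M / 2 = (2*a+2) * real n * ln (real n)" unfolding r_def M_def b_def using nr by (simp add: field_simps)
    then have h: "- r * real M / 2 = - ((2*a+2) * real n * ln (real n))" by linarith
    have h2: "2 * a * real n * ln (real n) + - ((2*a+2) * real n * ln (real n)) = - 2 * real n * ln (real n)"
      by (simp add: algebra_simps)
    show ?thesis unfolding h exp_add[symmetric] h2 ..
  qed
  also have "\<dots> < 1" using nr ln1 by simp
  finally show ?thesis using r0 r_half by simp
qed



theorem theorem1:
  fixes V :: "'a set" and E :: "'a set set"
  assumes "bipartite_graph V E" and "card V \<ge> 3"
  shows "\<exists>C > 0. \<exists>n0::nat. \<forall>n \<ge> n0.
           real (bip_ramsey V E (Kbip_V n) (Kbip_E n))
             > C * (real n / ln (real n)) powr ((real (card E) - 1) / (real (card V) - 2))"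
proof -
  note bg = assms(1)
  have sg: "simple_graph V E" using bg unfolding bipartite_graph_def by blast
  have finV: "finite V" using sg unfolding simple_graph_def by blast
  define p where "p = card V"
  define q where "q = card E"
  have p3: "p \<ge> 3" using assms(2) unfolding p_def .
  have Vne: "V \<noteq> {}" using p3 unfolding p_def by auto
  have pr: "real p - 2 > 0" using p3 by simp
  have lnpos: "ln (real n) \<ge> 1" if "n \<ge> 3" for n :: nat
  proof -
    have e3: "exp 1 \<le> (3::real)" using exp_le by simp
    have "ln (exp 1) \<le> ln (real n)" using e3 that by (subst ln_le_cancel_iff) auto
    then show ?thesis by simp
  qed
  show ?thesis
  proof (cases "q \<le> 1")
    case True
    show ?thesis
    proof (intro exI[of _ "1/2"] conjI exI[of _ "3::nat"] allI impI)
      fix n :: nat assume n3: "3 \<le> n"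
      have nr: "real n \<ge> 3" using n3 by simp
      have ln1: "ln (real n) \<ge> 1" using lnpos n3 by blast
      define x where "x = real n / ln (real n)"
      have "ln (real n) \<le> real n - 1" using nr by (intro ln_le_minus_one) auto
      then have x1: "x \<ge> 1" unfolding x_def using ln1 by (simp add: le_divide_eq)
      have e0: "(real (card E) - 1) / (real (card V) - 2) \<le> 0"
        using True pr unfolding p_def q_def by (intro divide_nonpos_pos) auto
      have "x powr ((real (card E) - 1) / (real (card V) - 2)) \<le> x powr 0"
        using x1 e0 by (intro powr_mono) auto
      then have xle: "x powr ((real (card E) - 1) / (real (card V) - 2)) \<le> 1" using x1 by simp
      define c :: "nat \<Rightarrow> nat \<Rightarrow> bool" where "c = (\<lambda>i j. True)"
      have K0: "KNN_verts 0 = {}" unfolding KNN_verts_def by auto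
      have "\<not> has_mono_copy 0 c True V E" unfolding has_mono_copy_def K0 using Vne by auto
      moreover have "\<not> has_mono_copy 0 c False (Kbip_V n) (Kbip_E n)"
      proof -
        have "(True, 0) \<in> Kbip_V n" unfolding Kbip_V_def using n3 by simp
        then show ?thesis unfolding has_mono_copy_def K0 by auto
      qed
      ultimately have "0 < bip_ramsey V E (Kbip_V n) (Kbip_E n)" by (rule br_gt[OF bg])
      then have "real (bip_ramsey V E (Kbip_V n) (Kbip_E n)) \<ge> 1" by simp
      then show "1/2 * (real n / ln (real n)) powr ((real (card E) - 1) / (real (card V) - 2))
            < real (bip_ramsey V E (Kbip_V n) (Kbip_E n))"
        using xle unfolding x_def by simp
    qed simp
  next
    case False
    then have q2: "q \<ge> 2" by simp
    define Kr where "Kr = real (p * (p * (2 * 2 ^ (p-2))))"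
    have "0 < p * (p * (2 * 2 ^ (p-2)))" using p3 by simp
    then have "1 \<le> p * (p * (2 * 2 ^ (p-2)))" by linarith
    then have Kr1: "Kr \<ge> 1" unfolding Kr_def by (metis of_nat_1 of_nat_le_iff)
    define a where "a = (real q - 1) / (real p - 2)"
    define b where "b = 4 * a + 4"
    define c0 where "c0 = (1 / (2 ^ (q+1) * Kr * b ^ (q-1))) powr (1 / (real p - 2))"
    have a0: "a > 0" unfolding a_def using q2 pr by simp
    have b0: "b > 0" unfolding b_def using a0 by simp
    have c0_pos: "c0 > 0" unfolding c0_def using Kr1 b0 by simp
    define n0 where "n0 = max 3 (nat \<lceil>16 * b^2\<rceil>)"
    show ?thesis
    proof (intro exI[of _ c0] conjI exI[of _ n0] allI impI)
      show "c0 > 0" by (rule c0_pos)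
      fix n :: nat assume nn0: "n0 \<le> n"
      have n3: "n \<ge> 3" using nn0 unfolding n0_def by simp
      have n16: "real n \<ge> 16 * b^2"
        using nn0 unfolding n0_def by simp
      define x where "x = real n / ln (real n)"
      define N where "N = nat \<lfloor>c0 * x powr a\<rfloor>"
      define r where "r = b * ln (real n) / real n"
      define K where "K = p * (p * (2 * (2*N) ^ (p-2)))"
      have KK: "real K \<le> Kr * real N ^ (p-2)"
        unfolding K_def Kr_def by (simp add: power_mult_distrib)
      have RP: "0 < r \<and> r \<le> 1/2 \<and>
          real ((N choose n) * (N choose n)) * ((1-r) ^ (n*n) * (1 + (r/(1-r)) ^ q) ^ (n*n*K)) < 1"
        by (rule real_part[OF p3 q2 Kr1 a_def b_def c0_def n16 n3 x_def N_def r_def KK])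
      have q1: "card E \<ge> 1" using q2 unfolding q_def by simp
      have n1: "n \<ge> 1" using n3 by simp
      obtain c where cc: "\<not> has_mono_copy N c True V E" "\<not> has_mono_copy N c False (Kbip_V n) (Kbip_E n)"
        using good_col[OF sg q1 n1 _ _ K_def[unfolded p_def]] RP unfolding q_def by blast
      have "N < bip_ramsey V E (Kbip_V n) (Kbip_E n)" using br_gt[OF bg cc] .
      then have "real N + 1 \<le> real (bip_ramsey V E (Kbip_V n) (Kbip_E n))" by linarith
      moreover have "c0 * x powr a < real N + 1"
      proof -
        have "c0 * x powr a \<ge> 0" using c0_pos by simp
        then show ?thesis unfolding N_def by linarith
      qed
      ultimately show "c0 * (real n / ln (real n)) powr ((real (card E) - 1) / (real (card V) - 2))
          < real (bip_ramsey V E (Kbip_V n) (Kbip_E n))"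
        unfolding x_def a_def p_def q_def by linarith
    qed
  qed
qed


end
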